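(* Let $\Sigma$ be a finite alphabet and let $C \subseteq \Sigma^n$ be a code with $|C|\ge 2$ and minimum Levenshtein distance $d$. Let $t_\mathsf{I}$ and $t_\mathsf{D}\le n$ be non-negative integers, let $N$ be a positive integer with $n - t_\mathsf{D} \le N \le n + t_\mathsf{I}$, let $v \in \Sigma^N$, and let $\ell = |B_\mathsf{L}(v, t_\mathsf{D}, t_\mathsf{I}) \cap C|$. If $$\left(n - \frac{d}{2}\right) t_\mathsf{I} < \left(\frac{d}{2} - t_\mathsf{D}\right)(n-t_\mathsf{D})$$ (equivalently, when $d<2n$, $t_\mathsf{I} < \frac{(d/2 - t_\mathsf{D})(n-t_\mathsf{D})}{n - d/2}$), then $$\ell \leq \frac{(d/2)(n+t_\mathsf{I})}{(d/2-t_\mathsf{D})(n-t_\mathsf{D})-(n-d/2)t_\mathsf{I}}.$$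
   Context: For words $x,y$ over $\Sigma$ (possibly of different lengths), the Levenshtein distance $d_\mathsf{L}(x,y)$ is the minimum number of single-symbol insertions and deletions needed to transform $x$ into $y$. The minimum Levenshtein distance of a code $C$ is $\min\{d_\mathsf{L}(c_1,c_2): c_1\neq c_2 \in C\}$. For a word $v$ and non-negative integers $a,b$, $B_\mathsf{L}(v,a,b)$ denotes the set of all words obtainable from $v$ by at most $a$ insertions and at most $b$ deletions. *)

theory Defs
  imports Complex_Main
begin

text \<open>The alphabet Sigma is the finite type 'a; words are lists over 'a.
  edits x i j y: y is obtained from x by exactly i single-symbol insertions
  and j single-symbol deletions (in any order).\<close>

inductive edits :: "'a list \<Rightarrow> nat \<Rightarrow> nat \<Rightarrow> 'a list \<Rightarrow> bool" where
  refl: "edits x 0 0 x"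
| ins: "edits x i j (u @ w) \<Longrightarrow> edits x (Suc i) j (u @ [a] @ w)"
| del: "edits x i j (u @ [a] @ w) \<Longrightarrow> edits x i (Suc j) (u @ w)"

definition lev_dist :: "'a list \<Rightarrow> 'a list \<Rightarrow> nat" where
  "lev_dist x y = (LEAST k. \<exists>i j. edits x i j y \<and> i + j = k)"

definition min_lev_dist :: "'a list set \<Rightarrow> nat" where
  "min_lev_dist C = Min {lev_dist c1 c2 | c1 c2. c1 \<in> C \<and> c2 \<in> C \<and> c1 \<noteq> c2}"

definition lev_ball :: "'a list \<Rightarrow> nat \<Rightarrow> nat \<Rightarrow> 'a list set" where
  "lev_ball v a b = {y. \<exists>i j. i \<le> a \<and> j \<le> b \<and> edits v i j y}"

end

theory Submission imports Defs "HOL-Library.Sublist" begin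

lemma nths_mono_subseq: "A \<subseteq> B \<Longrightarrow> subseq (nths xs A) (nths xs B)"
proof (induction xs arbitrary: A B)
  case Nil then show ?case by simp
next
  case (Cons a xs)
  have "{j. Suc j \<in> A} \<subseteq> {j. Suc j \<in> B}" using Cons.prems by auto
  then have h: "subseq (nths xs {j. Suc j \<in> A}) (nths xs {j. Suc j \<in> B})" by (rule Cons.IH)
  show ?case using Cons.prems h by (auto simp: nths_Cons)
qed

lemma nths_remove:
  "nths v S = x1 @ b # x2 \<Longrightarrow> \<exists>k\<in>S. nths v (S - {k}) = x1 @ x2"
proof (induction v arbitrary: S x1)
  case Nil then show ?case by simp
next
  case (Cons a l)
  let ?S' = "{j. Suc j \<in> S}"
  have e: "\<And>k. {j. Suc j \<in> S - {Suc k}} = ?S' - {k}" by auto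
  show ?case
  proof (cases "0 \<in> S")
    case True
    then have nv: "nths (a#l) S = a # nths l ?S'" by (simp add: nths_Cons)
    show ?thesis
    proof (cases x1)
      case Nil
      then have "nths l ?S' = x2" using Cons.prems nv by simp
      moreover have "nths (a#l) (S - {0}) = nths l ?S'" by (simp add: nths_Cons)
      ultimately show ?thesis using True Nil by auto
    next
      case (Cons c x1')
      then have "nths l ?S' = x1' @ b # x2" using Cons.prems nv by simp
      then obtain k where k: "k \<in> ?S'" "nths l (?S' - {k}) = x1' @ x2" using Cons.IH by blast
      have "nths (a#l) (S - {Suc k}) = a # nths l (?S' - {k})" using True by (auto simp: nths_Cons intro!: arg_cong[where f="nths l"])
      then show ?thesis using k Cons Cons.prems nv by (intro bexI[of _ "Suc k"]) auto
    qed
  next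
    case False
    then have "nths l ?S' = x1 @ b # x2" using Cons.prems by (simp add: nths_Cons)
    then obtain k where k: "k \<in> ?S'" "nths l (?S' - {k}) = x1 @ x2" using Cons.IH by blast
    have "nths (a#l) (S - {Suc k}) = nths l (?S' - {k})" using False by (auto simp: nths_Cons intro!: arg_cong[where f="nths l"])
    then show ?thesis using k by (intro bexI[of _ "Suc k"]) auto
  qed
qed

lemma subseq_del:
  assumes "subseq x (u @ a # w)"
  shows "subseq x (u @ w) \<or> (\<exists>x1 b x2. x = x1 @ b # x2 \<and> subseq (x1 @ x2) (u @ w))"
proof -
  obtain x1 x2 where x: "x = x1 @ x2" "subseq x1 u" "subseq x2 (a # w)"
    using assms by (auto elim: subseq_appendE)
  show ?thesis
  proof (cases x2)
    case Nil then show ?thesis using x by (auto intro: list_emb_append_mono)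
  next
    case (Cons c x2')
    show ?thesis
    proof (cases "c = a")
      case True
      then have "subseq x2' w" using x Cons by simp
      then show ?thesis using x Cons by (auto intro!: list_emb_append_mono)
    next
      case False
      then have "subseq x2 w" using x Cons by simp
      then show ?thesis using x by (auto intro: list_emb_append_mono)
    qed
  qed
qed

lemma edits_inv:
  "edits v i j c \<Longrightarrow> \<exists>S. S \<subseteq> {..<length v} \<and> card S + j \<ge> length v \<and> subseq (nths v S) c
     \<and> length c + j = length v + i"
proof (induction rule: edits.induct)
  case (refl x)
  have "nths x {..<length x} = x" by (simp add: nths_all)
  then show ?case by (intro exI[of _ "{..<length x}"]) auto
next
  case (ins x i j u w a)
  then obtain S where S: "S \<subseteq> {..<length x}" "card S + j \<ge> length x" "subseq (nths x S) (u @ w)"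
     "length (u @ w) + j = length x + i" by blast
  have "subseq (u @ w) (u @ [a] @ w)" by (simp add: subseq_append' list_emb_Cons)
  then have "subseq (nths x S) (u @ [a] @ w)" using S(3) by (rule subseq_order.trans[rotated])
  then show ?case using S by (intro exI[of _ S]) auto
next
  case (del x i j u a w)
  then obtain S where S: "S \<subseteq> {..<length x}" "card S + j \<ge> length x" "subseq (nths x S) (u @ a # w)"
     "length (u @ a # w) + j = length x + i" by auto
  from subseq_del[OF S(3)] show ?case
  proof
    assume "subseq (nths x S) (u @ w)"
    then show ?thesis using S by (intro exI[of _ S]) auto
  next
    assume "\<exists>x1 b x2. nths x S = x1 @ b # x2 \<and> subseq (x1 @ x2) (u @ w)"
    then obtain x1 b x2 where h: "nths x S = x1 @ b # x2" "subseq (x1 @ x2) (u @ w)" by blast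
    obtain k where k: "k \<in> S" "nths x (S - {k}) = x1 @ x2" using nths_remove[OF h(1)] by blast
    have fin: "finite S" using S(1) finite_subset by blast
    have "card (S - {k}) = card S - 1" using k fin by simp
    moreover have "card S \<ge> 1" using k fin by (metis One_nat_def Suc_leI card_gt_0_iff empty_iff)
    ultimately show ?thesis using S k h by (intro exI[of _ "S - {k}"]) auto
  qed
qed

lemma subseq_decomp:
  "subseq z y \<Longrightarrow> length z < length y \<Longrightarrow> \<exists>u a w. y = u @ a # w \<and> subseq z (u @ w)"
proof (induction rule: list_emb.induct)
  case (list_emb_Nil ys)
  then obtain a w where "ys = a # w" by (cases ys) auto
  then show ?case by (intro exI[of _ "[]"]) auto
next
  case (list_emb_Cons xs ys y)
  then show ?case by (intro exI[of _ "[]"]) auto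
next
  case (list_emb_Cons2 x y xs ys)
  then obtain u a w where "ys = u @ a # w" "subseq xs (u @ w)" by auto
  then show ?case using list_emb_Cons2 by (intro exI[of _ "y # u"]) auto
qed

lemma edits_up:
  "subseq z y \<Longrightarrow> edits x i j z \<Longrightarrow> edits x (i + (length y - length z)) j y"
proof (induction "length y - length z" arbitrary: y)
  case 0
  then have "y = z" using list_emb_length subseq_same_length by (metis diff_is_0_eq le_antisym)
  then show ?case using 0 by simp
next
  case (Suc m)
  then obtain u a w where y: "y = u @ a # w" "subseq z (u @ w)"
    using subseq_decomp by (metis zero_less_Suc zero_less_diff)
  have "m = length (u @ w) - length z" using Suc.hyps y by simp
  then have "edits x (i + m) j (u @ w)" using Suc y by blast
  then have "edits x (Suc (i + m)) j (u @ [a] @ w)" by (rule edits.ins)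
  moreover have "i + (length y - length z) = Suc (i+m)" using Suc.hyps by simp
  ultimately show ?case using y by simp
qed

lemma edits_down:
  "subseq z y \<Longrightarrow> edits x i j y \<Longrightarrow> edits x i (j + (length y - length z)) z"
proof (induction "length y - length z" arbitrary: y j)
  case 0
  then have "y = z" using list_emb_length subseq_same_length by (metis diff_is_0_eq le_antisym)
  then show ?case using 0 by simp
next
  case (Suc m)
  then obtain u a w where y: "y = u @ a # w" "subseq z (u @ w)"
    using subseq_decomp by (metis zero_less_Suc zero_less_diff)
  have "edits x i (Suc j) (u @ w)" using Suc.prems y by (metis append_Cons append_Nil edits.del)
  moreover have "m = length (u @ w) - length z" using Suc.hyps y by simp
  ultimately have "edits x i (Suc j + m) z" using Suc y by blast
  moreover have "j + (length y - length z) = Suc j + m" using Suc.hyps by simp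
  ultimately show ?case by simp
qed

lemma lev_common:
  assumes "subseq s x" "subseq s y"
  shows "lev_dist x y \<le> (length y - length s) + (length x - length s)"
proof -
  have "edits x 0 (0 + (length x - length s)) s" using edits_down[OF assms(1) edits.refl] .
  then have "edits x (0 + (length y - length s)) (length x - length s) y" using edits_up[OF assms(2), of x 0] by simp
  then show ?thesis unfolding lev_dist_def by (intro Least_le) auto
qed

lemma cs_sum:
  fixes f :: "'b \<Rightarrow> real"
  assumes "finite A"
  shows "(sum f A)^2 \<le> real (card A) * sum (\<lambda>p. (f p)^2) A"
proof -
  have "0 \<le> (\<Sum>p\<in>A. \<Sum>q\<in>A. (f p - f q)^2)" by (intro sum_nonneg) auto
  also have "\<dots> = (\<Sum>p\<in>A. \<Sum>q\<in>A. (f p)^2 + (f q)^2 - 2 * f p * f q)"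
    by (simp add: power2_diff)
  also have "\<dots> = 2 * real (card A) * sum (\<lambda>p. (f p)^2) A - 2 * (sum f A)^2"
    by (simp add: sum_subtractf sum.distrib sum_distrib_left sum_distrib_right power2_eq_square
        algebra_simps)
  finally show ?thesis by simp
qed

lemma counting:
  fixes L :: "'b set" and S :: "'b \<Rightarrow> nat set" and N w :: nat and lam :: real
  assumes fin: "finite L" and sub: "\<forall>c\<in>L. S c \<subseteq> {..<N}" and cw: "\<forall>c\<in>L. card (S c) = w"
    and int: "\<forall>c\<in>L. \<forall>c'\<in>L. c \<noteq> c' \<longrightarrow> real (card (S c \<inter> S c')) \<le> lam"
  shows "(real (card L) * real w)^2
          \<le> real N * (real (card L) * real w + real (card L) * (real (card L) - 1) * lam)"
proof -
  define ind where "ind c p = (if p \<in> S c then 1 else (0::real))" for c p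
  define m where "m p = (\<Sum>c\<in>L. ind c p)" for p
  have cardI: "(\<Sum>p<N. ind c p * ind c' p) = real (card (S c \<inter> S c'))" if "c \<in> L" for c c'
  proof -
    have "(\<Sum>p<N. ind c p * ind c' p) = (\<Sum>p\<in>{..<N}. if p \<in> S c \<inter> S c' then 1 else 0)"
      unfolding ind_def by (intro sum.cong) auto
    also have "\<dots> = (\<Sum>p\<in>{..<N} \<inter> (S c \<inter> S c'). 1)"
      by (simp only: sum.inter_restrict[OF finite_lessThan])
    also have "{..<N} \<inter> (S c \<inter> S c') = S c \<inter> S c'" using sub that by auto
    finally show ?thesis by simp
  qed
  have s1: "(\<Sum>p<N. m p) = real (card L) * real w"
  proof -
    have "(\<Sum>p<N. m p) = (\<Sum>c\<in>L. \<Sum>p<N. ind c p * ind c p)"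
      unfolding m_def by (subst sum.swap) (intro sum.cong, auto simp: ind_def)
    also have "\<dots> = (\<Sum>c\<in>L. real w)" using cardI cw by (intro sum.cong) auto
    finally show ?thesis by simp
  qed
  have s2: "(\<Sum>p<N. (m p)^2) \<le> real (card L) * (real w + (real (card L) - 1) * lam)"
  proof -
    have "(\<Sum>p<N. (m p)^2) = (\<Sum>p<N. \<Sum>c\<in>L. \<Sum>c'\<in>L. ind c p * ind c' p)"
      unfolding m_def power2_eq_square by (simp add: sum_product)
    also have "\<dots> = (\<Sum>c\<in>L. \<Sum>c'\<in>L. \<Sum>p<N. ind c p * ind c' p)"
      by (simp add: sum.swap[of _ "{..<N}"] sum.swap[of _ "{..<N}" L])
    also have "\<dots> = (\<Sum>c\<in>L. \<Sum>c'\<in>L. real (card (S c \<inter> S c')))"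
      using cardI by (intro sum.cong) auto
    also have "\<dots> \<le> (\<Sum>c\<in>L. real w + (real (card L) - 1) * lam)"
    proof (rule sum_mono)
      fix c assume c: "c \<in> L"
      have "(\<Sum>c'\<in>L. real (card (S c \<inter> S c'))) = real (card (S c \<inter> S c)) + (\<Sum>c'\<in>L - {c}. real (card (S c \<inter> S c')))"
        using c fin by (simp add: sum.remove)
      also have "\<dots> \<le> real w + (\<Sum>c'\<in>L - {c}. lam)"
        using c cw int by (intro add_mono sum_mono) auto
      also have "(\<Sum>c'\<in>L - {c}. lam) = (real (card L) - 1) * lam"
      proof -
        have "card L \<ge> 1" using c fin by (metis One_nat_def Suc_leI card_gt_0_iff empty_iff)
        then show ?thesis using c fin by (simp add: of_nat_diff)
      qed
      finally show "(\<Sum>c'\<in>L. real (card (S c \<inter> S c'))) \<le> real w + (real (card L) - 1) * lam" .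
    qed
    finally show ?thesis by simp
  qed
  have "(\<Sum>p<N. m p)^2 \<le> real N * (\<Sum>p<N. (m p)^2)" using cs_sum[of "{..<N}" m] by simp
  also have "\<dots> \<le> real N * (real (card L) * (real w + (real (card L) - 1) * lam))"
    using s2 by (intro mult_left_mono) auto
  finally show ?thesis unfolding s1 by (simp add: algebra_simps)
qed

lemma arith_final:
  fixes l w w0 N tI lam n :: real
  assumes l1: "l \<ge> 1" and cnt: "(l * w)^2 \<le> N * (l * w + l * (l - 1) * lam)"
    and Nw: "N \<le> w + tI" and ww0: "w0 \<le> w" and w0n: "w0 \<le> n" and lam0: "lam \<ge> 0" and tI0: "tI \<ge> 0"
    and N0: "N \<ge> 0"
    and hyp: "lam * tI < (w0 - lam) * w0" and w00: "w0 \<ge> 0"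
  shows "l \<le> (n - lam) * (n + tI) / ((w0 - lam) * w0 - lam * tI)"
proof -
  have "(w0 - lam) * w0 > 0" using hyp lam0 tI0 by (smt (verit) mult_nonneg_nonneg)
  then have a: "w0 - lam > 0" "w0 > 0" using w00 by (auto simp: zero_less_mult_iff)
  define D where "D = w * (w - lam) - tI * lam"
  define D0 where "D0 = w0 * (w0 - lam) - tI * lam"
  have D0p: "D0 > 0" unfolding D0_def using hyp by (simp add: algebra_simps)
  have "D - D0 = (w - w0) * (w + w0 - lam)" unfolding D_def D0_def by algebra
  moreover have "(w - w0) * (w + w0 - lam) \<ge> 0" using ww0 a by simp
  ultimately have DD0: "D \<ge> D0" by simp
  have c1: "l * (w * w) \<le> N * w + N * (l - 1) * lam"
  proof -
    have "l * (l * (w * w)) \<le> l * (N * w + N * (l - 1) * lam)"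
      using cnt by (simp add: power2_eq_square algebra_simps)
    then show ?thesis using l1 by simp
  qed
  have c2: "l * (w * w - N * lam) \<le> N * (w - lam)" using c1 by (simp add: algebra_simps)
  have "l * (w * w - (w + tI) * lam) \<le> l * (w * w - N * lam)"
    using Nw lam0 l1 by (intro mult_left_mono) (auto intro: mult_right_mono)
  also have "\<dots> \<le> N * (w - lam)" by (rule c2)
  also have "\<dots> \<le> (w + tI) * (w - lam)" using Nw a ww0 by (intro mult_right_mono) auto
  finally have "l * D \<le> D + tI * w" unfolding D_def by (simp add: algebra_simps)
  then have c3: "(l - 1) * D \<le> tI * w" by (simp add: algebra_simps)
  have "(l - 1) * D * D0 \<le> tI * w * D0" using c3 D0p by (intro mult_right_mono) auto
  also have "tI * w * D0 \<le> tI * w0 * D"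
  proof -
    have "w * D0 - w0 * D = (w0 - w) * (w * w0 + tI * lam)" unfolding D_def D0_def by algebra
    moreover have "(w0 - w) * (w * w0 + tI * lam) \<le> 0"
      using ww0 a lam0 tI0 by (intro mult_nonpos_nonneg) auto
    ultimately have "w * D0 \<le> w0 * D" by simp
    then show ?thesis using tI0 by (metis mult.assoc mult_left_mono)
  qed
  finally have "((l - 1) * D0) * D \<le> (tI * w0) * D" by (simp add: algebra_simps)
  then have "(l - 1) * D0 \<le> tI * w0" using DD0 D0p by (simp add: mult_le_cancel_right)
  then have "l * D0 \<le> (w0 + tI) * (w0 - lam)" unfolding D0_def by (simp add: algebra_simps)
  also have "\<dots> \<le> (n + tI) * (n - lam)" using a w0n tI0 by (intro mult_mono) auto
  finally have "l * D0 \<le> (n - lam) * (n + tI)" by (simp add: mult.commute)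
  then show ?thesis using D0p unfolding D0_def by (simp add: pos_le_divide_eq mult.commute)
qed

theorem mainTheorem2:
  fixes C :: "('a::finite) list set" and n d tI tD N :: nat and v :: "'a list"
  assumes "\<forall>c\<in>C. length c = n"
    and "card C \<ge> 2"
    and "min_lev_dist C = d"
    and "tD \<le> n"
    and "N > 0" and "n - tD \<le> N" and "N \<le> n + tI"
    and "length v = N"
    and "(real n - real d / 2) * real tI < (real d / 2 - real tD) * (real n - real tD)"
  shows "real (card (lev_ball v tD tI \<inter> C))
           \<le> (real d / 2) * (real n + real tI)
             / ((real d / 2 - real tD) * (real n - real tD) - (real n - real d / 2) * real tI)"
proof -
  note lenC = assms(1) and hyp = assms(9)
  define L where "L = lev_ball v tD tI \<inter> C"
  have finC: "finite C"
  proof -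
    have "C \<subseteq> {xs. set xs \<subseteq> UNIV \<and> length xs = n}" using lenC by auto
    moreover have "finite {xs. set xs \<subseteq> (UNIV::'a set) \<and> length xs = n}"
      by (rule finite_lists_length_eq) simp
    ultimately show ?thesis by (rule finite_subset)
  qed
  have finL: "finite L" unfolding L_def using finC by simp
  have dle: "real d \<le> real (lev_dist c c')" if "c \<in> C" "c' \<in> C" "c \<noteq> c'" for c c'
  proof -
    have "finite {lev_dist c1 c2 | c1 c2. c1 \<in> C \<and> c2 \<in> C \<and> c1 \<noteq> c2}"
    proof -
      have "{lev_dist c1 c2 | c1 c2. c1 \<in> C \<and> c2 \<in> C \<and> c1 \<noteq> c2} \<subseteq> (\<lambda>(a,b). lev_dist a b) ` (C \<times> C)"
        by auto
      then show ?thesis using finC by (meson finite_SigmaI finite_imageI finite_subset)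
    qed
    then have "min_lev_dist C \<le> lev_dist c c'" unfolding min_lev_dist_def
      using that by (intro Min_le) auto
    then show ?thesis using assms(3) by simp
  qed
  have dn: "real d \<le> 2 * real n"
  proof -
    obtain c c' where cc: "c \<in> C" "c' \<in> C" "c \<noteq> c'"
    proof -
      have "card C > 1" using assms(2) by simp
      then show ?thesis using that finC by (metis card_le_Suc0_iff_eq not_le One_nat_def)
    qed
    have "lev_dist c c' \<le> n + n" using lev_common[of "[]" c c'] cc lenC by simp
    then show ?thesis using dle[OF cc] by linarith
  qed
  define w where "w = max (N - tI) (n - tD)"
  have exS: "\<exists>T. T \<subseteq> {..<N} \<and> card T = w \<and> subseq (nths v T) c" if c: "c \<in> L" for c
  proof -
    obtain i j where ij: "i \<le> tD" "j \<le> tI" "edits v i j c" using c unfolding L_def lev_ball_def by auto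
    obtain S where S: "S \<subseteq> {..<N}" "card S + j \<ge> N" "subseq (nths v S) c" "length c + j = N + i"
      using edits_inv[OF ij(3)] assms(8) by auto
    have "length c = n" using c lenC unfolding L_def by auto
    then have "w \<le> card S" unfolding w_def using S ij by auto
    then obtain T where T: "T \<subseteq> S" "card T = w" by (meson obtain_subset_with_card_n)
    have "subseq (nths v T) c" using nths_mono_subseq[OF T(1)] S(3) by (rule subseq_order.trans)
    then show ?thesis using T S by (intro exI[of _ T]) auto
  qed
  then obtain S where S: "\<forall>c\<in>L. S c \<subseteq> {..<N} \<and> card (S c) = w \<and> subseq (nths v (S c)) c"
    by metis
  define lam where "lam = real n - real d / 2"
  have int: "\<forall>c\<in>L. \<forall>c'\<in>L. c \<noteq> c' \<longrightarrow> real (card (S c \<inter> S c')) \<le> lam"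
  proof (intro ballI impI)
    fix c c' assume cc: "c \<in> L" "c' \<in> L" "c \<noteq> c'"
    let ?s = "nths v (S c \<inter> S c')"
    have s1: "subseq ?s c" using S cc nths_mono_subseq[of "S c \<inter> S c'" "S c" v]
      by (metis inf_le1 subseq_order.trans)
    have s2: "subseq ?s c'" using S cc nths_mono_subseq[of "S c \<inter> S c'" "S c'" v]
      by (metis inf_le2 subseq_order.trans)
    have len: "length ?s = card (S c \<inter> S c')"
    proof -
      have "{i. i < length v \<and> i \<in> S c \<inter> S c'} = S c \<inter> S c'" using S cc assms(8) by auto
      then show ?thesis by (simp add: length_nths)
    qed
    have lc: "length c = n" "length c' = n" using cc lenC unfolding L_def by auto
    have "length ?s \<le> n" using list_emb_length[OF s1] lc by simp
    moreover have "lev_dist c c' \<le> (n - length ?s) + (n - length ?s)"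
      using lev_common[OF s1 s2] lc by simp
    moreover have "d \<le> lev_dist c c'" using dle[of c c'] cc unfolding L_def by auto
    ultimately have "d + 2 * length ?s \<le> 2 * n" by linarith
    then have "real d + 2 * real (length ?s) \<le> 2 * real n" by linarith
    then show "real (card (S c \<inter> S c')) \<le> lam" unfolding lam_def len[symmetric]
      by linarith
  qed
  have cnt: "(real (card L) * real w)^2
          \<le> real N * (real (card L) * real w + real (card L) * (real (card L) - 1) * lam)"
    by (rule counting[OF finL]) (use S int in auto)
  have den: "(real d / 2 - real tD) * (real n - real tD) - (real n - real d / 2) * real tI > 0"
    using hyp by simp
  show ?thesis
  proof (cases "card L = 0")
    case True
    then show ?thesis unfolding L_def[symmetric] using den by simp
  next
    case False
    then have l1: "real (card L) \<ge> 1" by simp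
    have wge: "real n - real tD \<le> real w" unfolding w_def using assms(4) by (simp add: of_nat_diff)
    have Nw: "real N \<le> real w + real tI" unfolding w_def by auto
    have r: "real (card L) \<le> (real n - lam) * (real n + real tI) /
         (((real n - real tD) - lam) * (real n - real tD) - lam * real tI)"
      apply (rule arith_final[OF l1 cnt Nw wge])
      using dn assms(4) hyp unfolding lam_def by auto
    have e1: "real n - lam = real d / 2" unfolding lam_def by simp
    have e2: "((real n - real tD) - lam) * (real n - real tD) - lam * real tI
       = (real d / 2 - real tD) * (real n - real tD) - (real n - real d / 2) * real tI"
      unfolding lam_def by (simp add: algebra_simps)
    show ?thesis using r unfolding e1 e2 L_def .
  qed
qed

end
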